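(* In the spectral sequence described in the context, if $r\geq 2$ and $r\not\equiv 4\pmod 9$ and $r\not\equiv 8\pmod 9$, then $d_r=0$. Furthermore, for every $n\geq 0$, $$d_{4+9n}(W_+^{(4+9n)})\subseteq W_-^{(4+9n)},\quad d_{4+9n}(W_-^{(4+9n)})=0,\quad d_{8+9n}(W_+^{(8+9n)})=0,\quad d_{8+9n}(W_-^{(8+9n)})\subseteq W_+^{(8+9n)}.$$
   Context: $k=\mathbb{F}_3$. The spectral sequence is the $b_{10}$-localized $K(\xi_1)$-based Adams spectral sequence converging to $b_{10}^{-1}\operatorname{Ext}_P(\mathbb{F}_3,\mathbb{F}_3)$, trigraded by $(s,t,u)$ (filtration, internal homological degree, internal topological degree) with $d_r:E_r^{s,t,u}\to E_r^{s+r,t-r+1,u}$ and $E_2\cong E[h_{10}]\otimes k[b_{10}^{\pm1}][w_2,w_3,\dots]$, where $h_{10}$ has degree $(0,1,4)$, $b_{10}$ has $(0,2,12)$, $w_n$ has $(1,1,2(3^n+1))$. On $E_2$, $W_+=k[b_{10}^{\pm1}][w_2,w_3,\dots]$ and $W_-=h_{10}W_+$; equivalently $W_+$ (resp. $W_-$) is spanned by the trihomogeneous elements with $s+t$ even (resp. odd). For each $r$, $W_+^{(r)}$ (resp. $W_-^{(r)}$) denotes the span of trihomogeneous elements of $E_r$ with $s+t$ even (resp. odd). *)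

theory Defs
  imports Complex_Main "HOL-Library.Multiset"
begin

text \<open>Tridegrees (s,t,u): filtration, internal homological degree, internal topological degree.\<close>
type_synonym tdeg = "int \<times> int \<times> int"

text \<open>Monomial basis of E_2 = E[h10] (x) k[b10^{+-1}][w_2,w_3,...]: a monomial
  h10^e b10^k w_{n_1}...w_{n_m} is encoded as (e, k, {#n_1,...,n_m#}) with e in {0,1},
  k an integer and all n_i >= 2.  Its tridegree is
  e*(0,1,4) + k*(0,2,12) + sum_i (1,1,2(3^{n_i}+1)).\<close>
definition E2_monomials :: "tdeg \<Rightarrow> (nat \<times> int \<times> nat multiset) set" where
  "E2_monomials deg = (case deg of (s, t, u) \<Rightarrow>
     {(e, k, M). e \<le> 1 \<and> (\<forall>n\<in>#M. 2 \<le> n)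
        \<and> s = int (size M)
        \<and> t = int e + 2 * k + int (size M)
        \<and> u = 4 * int e + 12 * k + (\<Sum>n\<in>#M. 2 * (3 ^ n + 1))})"

text \<open>A trigraded spectral sequence (pages r >= 2) of k-vector spaces inside an ambient
  k-vector space 'v.  E r (s,t,u) is the subspace E_r^{s,t,u}; d r is the differential
  d_r : E_r^{s,t,u} -> E_r^{s+r,t-r+1,u}; E_{r+1}^{s,t,u} is the homology of d_r at (s,t,u)
  (expressed by a linear surjection from the cycles with kernel the boundaries); and
  E_2^{s,t,u} has a basis indexed by the monomials of E[h10] (x) k[b10^{+-1}][w_2,w_3,...]
  of tridegree (s,t,u).\<close>
definition b10_KAdams_ss ::
  "('k::field \<Rightarrow> 'v::ab_group_add \<Rightarrow> 'v) \<Rightarrow> (nat \<Rightarrow> tdeg \<Rightarrow> 'v set) \<Rightarrow> (nat \<Rightarrow> 'v \<Rightarrow> 'v) \<Rightarrow> bool"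
where
  "b10_KAdams_ss scale E d \<longleftrightarrow>
     vector_space scale
   \<and> (\<forall>r\<ge>2. \<forall>deg. module.subspace scale (E r deg))
   \<and> (\<forall>r\<ge>2. Vector_Spaces.linear scale scale (d r))
   \<and> (\<forall>r\<ge>2. \<forall>s t u. d r ` E r (s, t, u) \<subseteq> E r (s + int r, t - int r + 1, u))
   \<and> (\<forall>r\<ge>2. \<forall>deg. \<forall>x\<in>E r deg. d r (d r x) = 0)
   \<and> (\<forall>r\<ge>2. \<forall>s t u.
        let Z = {x \<in> E r (s, t, u). d r x = 0} in
        \<exists>\<pi> :: 'v \<Rightarrow> 'v.
          (\<forall>x\<in>Z. \<forall>y\<in>Z. \<pi> (x + y) = \<pi> x + \<pi> y)
        \<and> (\<forall>c. \<forall>x\<in>Z. \<pi> (scale c x) = scale c (\<pi> x))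
        \<and> \<pi> ` Z = E (Suc r) (s, t, u)
        \<and> {x \<in> Z. \<pi> x = 0} = d r ` E r (s - int r, t + int r - 1, u))
   \<and> (\<forall>deg. \<exists>b :: nat \<times> int \<times> nat multiset \<Rightarrow> 'v.
        inj_on b (E2_monomials deg)
      \<and> module.independent scale (b ` E2_monomials deg)
      \<and> module.span scale (b ` E2_monomials deg) = E 2 deg)"

definition page_total :: "('k::field \<Rightarrow> 'v::ab_group_add \<Rightarrow> 'v) \<Rightarrow> (nat \<Rightarrow> tdeg \<Rightarrow> 'v set) \<Rightarrow> nat \<Rightarrow> 'v set" where
  "page_total scale E r = module.span scale (\<Union>deg. E r deg)"

definition W_plus :: "('k::field \<Rightarrow> 'v::ab_group_add \<Rightarrow> 'v) \<Rightarrow> (nat \<Rightarrow> tdeg \<Rightarrow> 'v set) \<Rightarrow> nat \<Rightarrow> 'v set" where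
  "W_plus scale E r = module.span scale (\<Union>{E r (s, t, u) | s t u. even (s + t)})"

definition W_minus :: "('k::field \<Rightarrow> 'v::ab_group_add \<Rightarrow> 'v) \<Rightarrow> (nat \<Rightarrow> tdeg \<Rightarrow> 'v set) \<Rightarrow> nat \<Rightarrow> 'v set" where
  "W_minus scale E r = module.span scale (\<Union>{E r (s, t, u) | s t u. odd (s + t)})"

end

theory Submission
  imports Defs
begin

lemma msum_mod:
  assumes "\<forall>n\<in>#M. 2 \<le> n"
  shows "\<exists>c::int. (\<Sum>n\<in>#M. 2 * (3 ^ n + 1)) = 18 * c + 2 * int (size M)"
  using assms
proof (induction M)
  case empty then show ?case by simp
next
  case (add x M)
  then obtain c :: int where c: "(\<Sum>n\<in>#M. 2 * (3 ^ n + 1)) = 18 * c + 2 * int (size M)" by auto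
  have "2 \<le> x" using add.prems by simp
  then obtain j where j: "x = j + 2" by (metis add.commute le_Suc_ex)
  have "(3::int) ^ x = 9 * 3 ^ j" by (simp add: j power_add)
  then show ?case using c by (intro exI[of _ "c + 3 ^ j"]) simp
qed

lemma mono_deg:
  assumes "(e, k, M) \<in> E2_monomials (s, t, u)"
  shows "\<exists>c::int. e \<le> 1 \<and> s = int (size M) \<and> t = int e + 2 * k + s
     \<and> u = 4 * int e + 12 * k + 18 * c + 2 * s"
proof -
  from assms have h: "e \<le> 1" "\<forall>n\<in>#M. 2 \<le> n" "s = int (size M)"
     "t = int e + 2 * k + int (size M)"
     "u = 4 * int e + 12 * k + (\<Sum>n\<in>#M. 2 * (3 ^ n + 1))"
    by (auto simp: E2_monomials_def)
  from msum_mod[OF h(2)] obtain c where "(\<Sum>n\<in>#M. 2 * (3 ^ n + 1)) = 18 * c + 2 * int (size M)" by blast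
  with h show ?thesis by (intro exI[of _ c]) auto
qed

lemma ss_vs:
  fixes scale :: "'k::field \<Rightarrow> 'v::ab_group_add \<Rightarrow> 'v"
  assumes "b10_KAdams_ss scale E d"
  shows "vector_space scale"
  using assms unfolding b10_KAdams_ss_def by (elim conjE) assumption

lemma ss_sub:
  fixes scale :: "'k::field \<Rightarrow> 'v::ab_group_add \<Rightarrow> 'v"
  assumes "b10_KAdams_ss scale E d"
  shows "\<forall>r\<ge>2. \<forall>deg. module.subspace scale (E r deg)"
  using assms unfolding b10_KAdams_ss_def by (elim conjE) assumption

lemma ss_lin:
  fixes scale :: "'k::field \<Rightarrow> 'v::ab_group_add \<Rightarrow> 'v"
  assumes "b10_KAdams_ss scale E d"
  shows "\<forall>r\<ge>2. Vector_Spaces.linear scale scale (d r)"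
  using assms unfolding b10_KAdams_ss_def by (elim conjE) assumption

lemma ss_maps:
  fixes scale :: "'k::field \<Rightarrow> 'v::ab_group_add \<Rightarrow> 'v"
  assumes "b10_KAdams_ss scale E d"
  shows "\<forall>r\<ge>2. \<forall>s t u. d r ` E r (s, t, u) \<subseteq> E r (s + int r, t - int r + 1, u)"
  using assms unfolding b10_KAdams_ss_def by (elim conjE) assumption

lemma ss_hom:
  fixes scale :: "'k::field \<Rightarrow> 'v::ab_group_add \<Rightarrow> 'v"
  assumes "b10_KAdams_ss scale E d"
  shows "\<forall>r\<ge>2. \<forall>s t u.
        let Z = {x \<in> E r (s, t, u). d r x = 0} in
        \<exists>\<pi> :: 'v \<Rightarrow> 'v.
          (\<forall>x\<in>Z. \<forall>y\<in>Z. \<pi> (x + y) = \<pi> x + \<pi> y)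
        \<and> (\<forall>c. \<forall>x\<in>Z. \<pi> (scale c x) = scale c (\<pi> x))
        \<and> \<pi> ` Z = E (Suc r) (s, t, u)
        \<and> {x \<in> Z. \<pi> x = 0} = d r ` E r (s - int r, t + int r - 1, u)"
  using assms unfolding b10_KAdams_ss_def by (elim conjE) assumption

lemma ss_E2:
  fixes scale :: "'k::field \<Rightarrow> 'v::ab_group_add \<Rightarrow> 'v"
  assumes "b10_KAdams_ss scale E d"
  shows "\<forall>deg. \<exists>b :: nat \<times> int \<times> nat multiset \<Rightarrow> 'v.
        inj_on b (E2_monomials deg)
      \<and> module.independent scale (b ` E2_monomials deg)
      \<and> module.span scale (b ` E2_monomials deg) = E 2 deg"
  using assms unfolding b10_KAdams_ss_def by (elim conjE) assumption

lemma E_zero: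
  assumes ss: "b10_KAdams_ss scale E d" and em: "E2_monomials deg = {}" and r: "2 \<le> r"
  shows "E r deg = {0}"
  using r
proof (induction r rule: dec_induct)
  case base
  from ss_E2[OF ss] obtain b where b: "module.span scale (b ` E2_monomials deg) = E 2 deg"
    by blast
  have md: "module scale" using ss_vs[OF ss] by (simp add: module_iff_vector_space)
  have "E 2 deg = module.span scale {}" using b em by simp
  also have "\<dots> = {0}" by (rule module.span_empty[OF md])
  finally show ?case .
next
  case (step r)
  obtain s t u where deg: "deg = (s, t, u)" by (cases deg) auto
  define Z where "Z = {x \<in> E r (s, t, u). d r x = 0}"
  have "\<exists>\<pi>. (\<forall>x\<in>Z. \<forall>y\<in>Z. \<pi> (x + y) = \<pi> x + \<pi> y)
        \<and> (\<forall>c. \<forall>x\<in>Z. \<pi> (scale c x) = scale c (\<pi> x))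
        \<and> \<pi> ` Z = E (Suc r) (s, t, u)
        \<and> {x \<in> Z. \<pi> x = 0} = d r ` E r (s - int r, t + int r - 1, u)"
    using ss_hom[OF ss] step(1) unfolding Z_def Let_def by blast
  then obtain \<pi> where p1: "\<forall>x\<in>Z. \<forall>y\<in>Z. \<pi> (x + y) = \<pi> x + \<pi> y"
     and p2: "\<pi> ` Z = E (Suc r) (s, t, u)" by (elim exE conjE)
  have lin: "Vector_Spaces.linear scale scale (d r)" using ss_lin[OF ss] step(1) by blast
  then have "d r 0 = 0" by (simp add: linear_iff_module_hom module_hom.zero)
  then have Z0: "Z = {0}" using step(3) by (auto simp: Z_def deg)
  have "\<pi> 0 = \<pi> 0 + \<pi> 0" using p1 Z0 by simp
  then have "\<pi> 0 = 0" by simp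
  then show ?case using p2 deg Z0 by auto
qed
lemma tomod9: fixes r j :: nat and q :: int shows "int r = int j + 9 * q \<Longrightarrow> j < 9 \<Longrightarrow> r mod 9 = j"
proof -
  assume a: "int r = int j + 9 * q" "j < 9"
  have "int r mod 9 = int j" using a by simp
  then show ?thesis using a(2) by (metis of_nat_eq_iff of_nat_mod of_nat_numeral)
qed

lemma arith_core:
  fixes s t u k c k' c' :: int and e e' m m' r :: nat
  assumes "e \<le> 1" "s = int m" "t = int e + 2 * k + s" "u = 4 * int e + 12 * k + 18 * c + 2 * s"
    "e' \<le> 1" "s + int r = int m'" "t - int r + 1 = int e' + 2 * k' + (s + int r)"
    "u = 4 * int e' + 12 * k' + 18 * c' + 2 * (s + int r)"
  shows "(r mod 9 = 4 \<and> even (s + t)) \<or> (r mod 9 = 8 \<and> odd (s + t))"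
proof -
  have A: "5 * int r = 3 - int e' + int e + 9 * (c' - c)" using assms(3,4,7,8) by smt
  have B: "s + t = 2 * (s + k) + int e" using assms(3) by smt
  have C: "1 - 2 * int r = int e' + 2 * k' - int e - 2 * k" using assms(3,7) by smt
  show ?thesis
  proof (cases "e = 0")
    case True
    have e': "e' = 1"
    proof (rule ccontr)
      assume "e' \<noteq> 1" then have "e' = 0" using assms(5) by simp
      then have "1 = 2 * (int r + k' - k)" using C True by smt
      then show False by presburger
    qed
    have "5 * int r = 2 + 9 * (c' - c)" using A True e' by simp
    then have "int r = 4 + 9 * (2 * (c' - c) - int r)" by smt
    then have "int r = int 4 + 9 * (2 * (c' - c) - int r)" by simp
    then have "r mod 9 = 4" by (rule tomod9) simp
    moreover have "even (s + t)" using B True by simp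
    ultimately show ?thesis by blast
  next
    case False
    then have e: "e = 1" using assms(1) by simp
    have e': "e' = 0"
    proof (rule ccontr)
      assume "e' \<noteq> 0" then have "e' = 1" using assms(5) by simp
      then have "1 = 2 * (int r + k' - k)" using C e by smt
      then show False by presburger
    qed
    have "5 * int r = 4 + 9 * (c' - c)" using A e e' by simp
    then have "int r = 8 + 9 * (2 * (c' - c) - int r)" by smt
    then have "int r = int 8 + 9 * (2 * (c' - c) - int r)" by simp
    then have "r mod 9 = 8" by (rule tomod9) simp
    moreover have "odd (s + t)" using B e by simp
    ultimately show ?thesis by blast
  qed
qed

lemma d_zero_deg:
  assumes ss: "b10_KAdams_ss scale E d" and r: "2 \<le> r" and x: "x \<in> E r (s, t, u)"
    and nc: "\<not> ((r mod 9 = 4 \<and> even (s + t)) \<or> (r mod 9 = 8 \<and> odd (s + t)))"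
  shows "d r x = 0"
proof -
  have lin: "Vector_Spaces.linear scale scale (d r)" using ss_lin[OF ss] r by blast
  then have d0: "d r 0 = 0" by (simp add: linear_iff_module_hom module_hom.zero)
  have img: "d r x \<in> E r (s + int r, t - int r + 1, u)" using ss_maps[OF ss] r x by blast
  show ?thesis
  proof (cases "E2_monomials (s, t, u) = {}")
    case True then show ?thesis using E_zero[OF ss True r] x d0 by auto
  next
    case False
    then obtain e k M where m1: "(e, k, M) \<in> E2_monomials (s, t, u)" by auto
    show ?thesis
    proof (cases "E2_monomials (s + int r, t - int r + 1, u) = {}")
      case True then show ?thesis using E_zero[OF ss True r] img by auto
    next
      case False
      then obtain e' k' M' where m2: "(e', k', M') \<in> E2_monomials (s + int r, t - int r + 1, u)" by auto
      from mono_deg[OF m1] obtain c where c: "e \<le> 1" "s = int (size M)" "t = int e + 2 * k + s"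
          "u = 4 * int e + 12 * k + 18 * c + 2 * s" by blast
      from mono_deg[OF m2] obtain c' where c': "e' \<le> 1" "s + int r = int (size M')"
          "t - int r + 1 = int e' + 2 * k' + (s + int r)"
          "u = 4 * int e' + 12 * k' + 18 * c' + 2 * (s + int r)" by blast
      have False using arith_core[OF c c'] nc by blast
      then show ?thesis ..
    qed
  qed
qed

theorem proposition2p3:
  fixes scale :: "'k::{field, finite} \<Rightarrow> 'v::ab_group_add \<Rightarrow> 'v"
    and E :: "nat \<Rightarrow> int \<times> int \<times> int \<Rightarrow> 'v set"
    and d :: "nat \<Rightarrow> 'v \<Rightarrow> 'v"
  assumes "card (UNIV :: 'k set) = 3"
    and "b10_KAdams_ss scale E d"
  shows "(\<forall>r\<ge>2. r mod 9 \<noteq> 4 \<and> r mod 9 \<noteq> 8 \<longrightarrow> (\<forall>x\<in>page_total scale E r. d r x = 0))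
    \<and> (\<forall>n::nat.
          d (4 + 9 * n) ` W_plus scale E (4 + 9 * n) \<subseteq> W_minus scale E (4 + 9 * n)
        \<and> (\<forall>x\<in>W_minus scale E (4 + 9 * n). d (4 + 9 * n) x = 0)
        \<and> (\<forall>x\<in>W_plus scale E (8 + 9 * n). d (8 + 9 * n) x = 0)
        \<and> d (8 + 9 * n) ` W_minus scale E (8 + 9 * n) \<subseteq> W_plus scale E (8 + 9 * n))"
proof -
  note ss = assms(2)
  have mh: "module_hom scale scale (d r)" if "2 \<le> r" for r
    using ss_lin[OF ss] that by (simp add: linear_iff_module_hom)
  have md: "module scale" using ss_vs[OF ss] by (simp add: module_iff_vector_space)
  have maps: "d r x \<in> E r (s + int r, t - int r + 1, u)" if "2 \<le> r" "x \<in> E r (s, t, u)" for r x s t u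
    using ss_maps[OF ss] that by blast
  have P1: "\<forall>x\<in>page_total scale E r. d r x = 0" if "2 \<le> r" "r mod 9 \<noteq> 4" "r mod 9 \<noteq> 8" for r
  proof
    fix x assume x: "x \<in> page_total scale E r"
    have "\<forall>y\<in>(\<Union>deg. E r deg). d r y = 0"
    proof
      fix y assume "y \<in> (\<Union>deg. E r deg)"
      then obtain deg where "y \<in> E r deg" by blast
      moreover obtain s t u where "deg = (s, t, u)" by (cases deg) auto
      ultimately have y: "y \<in> E r (s, t, u)" by simp
      have "\<not> ((r mod 9 = 4 \<and> even (s + t)) \<or> (r mod 9 = 8 \<and> odd (s + t)))" using that(2,3) by simp
      then show "d r y = 0" by (rule d_zero_deg[OF ss that(1) y])
    qed
    then show "d r x = 0"
      using module_hom.eq_0_on_span[OF mh[OF that(1)]] x unfolding page_total_def by blast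
  qed
  have Z: "\<forall>x\<in>module.span scale (\<Union>{E r (s, t, u) | s t u. P (s + t)}). d r x = 0"
    if "2 \<le> r" "\<And>s t. P (s + t) \<Longrightarrow> \<not> ((r mod 9 = 4 \<and> even (s + t)) \<or> (r mod 9 = 8 \<and> odd (s + t)))"
    for r and P :: "int \<Rightarrow> bool"
  proof
    fix x assume x: "x \<in> module.span scale (\<Union>{E r (s, t, u) | s t u. P (s + t)})"
    have "\<forall>y\<in>\<Union>{E r (s, t, u) | s t u. P (s + t)}. d r y = 0"
    proof
      fix y assume "y \<in> \<Union>{E r (s, t, u) | s t u. P (s + t)}"
      then obtain s t u where y: "y \<in> E r (s, t, u)" and p: "P (s + t)" by blast
      show "d r y = 0" by (rule d_zero_deg[OF ss that(1) y that(2)[OF p]])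
    qed
    then show "d r x = 0"
      using module_hom.eq_0_on_span[OF mh[OF that(1)]] x by blast
  qed
  have I: "d r ` module.span scale (\<Union>{E r (s, t, u) | s t u. P (s + t)})
       \<subseteq> module.span scale (\<Union>{E r (s, t, u) | s t u. Q (s + t)})"
    if "2 \<le> r" "\<And>a. P a \<Longrightarrow> Q (a + 1)" for r and P Q :: "int \<Rightarrow> bool"
  proof -
    have "d r ` (\<Union>{E r (s, t, u) | s t u. P (s + t)}) \<subseteq> (\<Union>{E r (s, t, u) | s t u. Q (s + t)})"
    proof
      fix y assume "y \<in> d r ` (\<Union>{E r (s, t, u) | s t u. P (s + t)})"
      then obtain x where x: "x \<in> \<Union>{E r (s, t, u) | s t u. P (s + t)}" and yx: "y = d r x" by blast
      then obtain s t u where h1: "x \<in> E r (s, t, u)" and h2: "P (s + t)" by blast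
      have y1: "y \<in> E r (s + int r, t - int r + 1, u)" using maps[OF that(1) h1] yx by simp
      have "(s + int r) + (t - int r + 1) = (s + t) + 1" by simp
      then have y2: "Q ((s + int r) + (t - int r + 1))" using that(2)[OF h2] by (simp add: add.assoc)
      show "y \<in> (\<Union>{E r (s, t, u) | s t u. Q (s + t)})" using y1 y2 by blast
    qed
    then have "module.span scale (d r ` (\<Union>{E r (s, t, u) | s t u. P (s + t)}))
       \<subseteq> module.span scale (\<Union>{E r (s, t, u) | s t u. Q (s + t)})"
      by (rule module.span_mono[OF md])
    then show ?thesis using module_hom.span_image[OF mh[OF that(1)]] by simp
  qed
  show ?thesis
  proof (intro conjI allI impI)
    fix r :: nat assume "2 \<le> r" "r mod 9 \<noteq> 4 \<and> r mod 9 \<noteq> 8"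
    then show "\<forall>x\<in>page_total scale E r. d r x = 0" using P1 by blast
  next
    fix n :: nat
    have m4: "(4 + 9 * n) mod 9 = 4" by presburger
    have m8: "(8 + 9 * n) mod 9 = 8" by presburger
    have r4: "2 \<le> 4 + 9 * n" and r8: "2 \<le> 8 + 9 * n" by simp_all
    have eo: "\<And>a::int. even a \<Longrightarrow> odd (a + 1)" by simp
    have oe: "\<And>a::int. odd a \<Longrightarrow> even (a + 1)" by simp
    show "d (4 + 9 * n) ` W_plus scale E (4 + 9 * n) \<subseteq> W_minus scale E (4 + 9 * n)"
      unfolding W_plus_def W_minus_def by (rule I[where P=even and Q=odd, OF r4 eo])
    show "d (8 + 9 * n) ` W_minus scale E (8 + 9 * n) \<subseteq> W_plus scale E (8 + 9 * n)"
      unfolding W_plus_def W_minus_def by (rule I[where P=odd and Q=even, OF r8 oe])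
    have c4: "\<And>s t::int. odd (s + t) \<Longrightarrow> \<not> (((4 + 9 * n) mod 9 = 4 \<and> even (s + t)) \<or> ((4 + 9 * n) mod 9 = 8 \<and> odd (s + t)))"
      using m4 by simp
    have c8: "\<And>s t::int. even (s + t) \<Longrightarrow> \<not> (((8 + 9 * n) mod 9 = 4 \<and> even (s + t)) \<or> ((8 + 9 * n) mod 9 = 8 \<and> odd (s + t)))"
      using m8 by simp
    show "\<forall>x\<in>W_minus scale E (4 + 9 * n). d (4 + 9 * n) x = 0"
      unfolding W_minus_def by (rule Z[where P=odd, OF r4 c4])
    show "\<forall>x\<in>W_plus scale E (8 + 9 * n). d (8 + 9 * n) x = 0"
      unfolding W_plus_def by (rule Z[where P=even, OF r8 c8])
  qed
qed

end
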